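(* Let $0<\alpha<1$, $t=2^{1-\alpha}$, and let $x\in[0,1]$ be a non-dyadic number with $x\notin\mathcal{S}$. Then there exists $\delta>0$ such that for every $n\ge0$ there exists $J_n\ge n$ with $$\frac{1}{2^{1-\alpha}-1}\,2^{J_n(1-\alpha)}>|C_{J_n-1}(x)|>\delta\, 2^{J_n(1-\alpha)}$$ and either [$C_{J_n-1}(x)>0$ and $i_{J_n+1}(x)=0$] or [$C_{J_n-1}(x)<0$ and $i_{J_n+1}(x)=1$].
   Context: For $x\in[0,1]$ let $i_l(x)\in\{0,1\}$ be its binary digits, $x=\sum_{l\ge1}i_l(x)2^{-l}$. For $n\ge0$, $C_n(x)=\sum_{j=0}^{n}(-1)^{i_{j+1}(x)}2^{(1-\alpha)j}$ (the slope at $x$ of the piecewise affine partial sum $F_n(x)=\sum_{j=0}^n 2^{-\alpha j}\mathrm{dist}(2^jx,\mathbb{Z})$). $\mathcal{S}$ is the set of points of $[0,1]$ of the form $\frac{k}{2^{N}}+\frac{1}{3\cdot 2^{N}}$ or $\frac{k}{2^{N}}+\frac{2}{3\cdot 2^{N}}$ with $k,N\in\mathbb{N}$ (equivalently, points with $i_j(x)+i_{j+1}(x)=1$ for all large $j$). A dyadic number is one of the form $K2^{-N}$ with $K,N\in\mathbb{N}$. *)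

theory Defs
  imports Complex_Main
begin

text \<open>Binary digit i_l(x): x = sum_{l>=1} i_l(x) 2^{-l}. For non-dyadic x the expansion is unique
  and given by the l-th digit floor(2^l x) mod 2.\<close>
definition bindigit :: "nat \<Rightarrow> real \<Rightarrow> nat" where
  "bindigit l x = nat (\<lfloor>2 ^ l * x\<rfloor> mod 2)"

definition Cslope :: "real \<Rightarrow> nat \<Rightarrow> real \<Rightarrow> real" where
  "Cslope \<alpha> n x = (\<Sum>j=0..n. (-1) ^ bindigit (j+1) x * 2 powr ((1 - \<alpha>) * real j))"

definition dyadic :: "real \<Rightarrow> bool" where
  "dyadic x \<longleftrightarrow> (\<exists>K N :: nat. x = real K / 2 ^ N)"

definition setS :: "real set" where
  "setS = {x \<in> {0..1}. \<exists>k N :: nat.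
      x = real k / 2 ^ N + 1 / (3 * 2 ^ N) \<or> x = real k / 2 ^ N + 2 / (3 * 2 ^ N)}"

end

theory Submission
  imports Defs
begin
lemma chain:
  fixes t A \<delta> s :: real and eps b :: "nat \<Rightarrow> real"
  assumes t: "t > 1" and rec: "\<And>m. b (Suc m) = b m / t + eps (Suc m)"
    and epsv: "\<And>m. eps m = 1 \<or> eps m = -1" and s: "s = 1 \<or> s = -1"
    and A: "A > 1 + \<delta>" and d: "\<delta> > 0"
  shows "k \<le> m \<Longrightarrow> 1 \<le> m \<Longrightarrow> s * b m \<le> -A \<Longrightarrow>
    (\<exists>J. m - k \<le> J \<and> 1 \<le> J \<and> eps J * b (J-1) > \<delta> * t) \<or> s * b (m-k) \<le> -A - real k"
proof (induction k arbitrary: m)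
  case 0 then show ?case by simp
next
  case (Suc k)
  have "k \<le> m" using Suc.prems by simp
  from Suc.IH[OF this Suc.prems(2,3)] consider (g) "\<exists>J. m - k \<le> J \<and> 1 \<le> J \<and> eps J * b (J-1) > \<delta> * t"
     | (c) "s * b (m-k) \<le> -A - real k" by blast
  then show ?case
  proof cases
    case g
    then obtain J where "m - k \<le> J" "1 \<le> J" "eps J * b (J-1) > \<delta> * t" by blast
    moreover have "m - Suc k \<le> J" using \<open>m - k \<le> J\<close> by linarith
    ultimately show ?thesis by blast
  next
    case c
    define m' where "m' = m - k"
    have m'1: "m' \<ge> 1" and m'S: "m' = Suc (m' - 1)" using Suc.prems m'_def by auto
    have recm: "b m' = b (m'-1) / t + eps m'" using rec[of "m'-1"] m'S by simp
    have sb: "s * b (m'-1) = t * (s * b m' - s * eps m')"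
      using recm t by (simp add: field_simps)
    have cm: "s * b m' \<le> -A - real k" using c m'_def by simp
    show ?thesis
    proof (cases "eps m' = s")
      case True
      have "s * eps m' = 1" using True s by auto
      hence "s * b (m'-1) = t * (s * b m' - 1)" using sb by simp
      also have "\<dots> \<le> t * (-A - real k - 1)" using cm t by simp
      also have "\<dots> \<le> -A - real k - 1"
      proof -
        have "-A - real k - 1 \<le> 0" using A d by simp
        hence "t * (-A - real k - 1) \<le> 1 * (-A - real k - 1)"
          using t by (intro mult_right_mono_neg) auto
        thus ?thesis by simp
      qed
      finally have "s * b (m - Suc k) \<le> -A - real (Suc k)" using m'_def by (simp add: algebra_simps)
      then show ?thesis by blast
    next
      case False
      hence e: "eps m' = -s" using epsv[of m'] s by auto
      hence "s * eps m' = -1" using s by auto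
      hence "s * b (m'-1) = t * (s * b m' + 1)" using sb by simp
      also have "\<dots> \<le> t * (1 - A)" using cm t by simp
      also have "\<dots> < t * (-\<delta>)" using A t by (intro mult_strict_left_mono) auto
      finally have "eps m' * b (m'-1) > \<delta> * t" using e by (simp add: algebra_simps)
      moreover have "m - Suc k \<le> m'" using m'_def by simp
      ultimately show ?thesis using m'1 by blast
    qed
  qed
qed

lemma abstract:
  fixes t :: real and eps b :: "nat \<Rightarrow> real"
  assumes t: "t > 1" and rec: "\<And>m. b (Suc m) = b m / t + eps (Suc m)"
    and epsv: "\<And>m. eps m = 1 \<or> eps m = -1"
    and bound: "\<And>m. \<bar>b m\<bar> < t / (t - 1)"
    and pairs: "\<And>N. \<exists>p\<ge>N. eps p = eps (Suc p)"
  shows "\<exists>\<delta>>0. \<forall>n. \<exists>J\<ge>n. 1 \<le> J \<and> eps J * b (J-1) > \<delta> * t"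
proof -
  define \<delta> where "\<delta> = (t - 1) / (2 * (t^2 + 1))"
  define A where "A = t * (1 - \<delta> * t)"
  have dpos: "\<delta> > 0" using t unfolding \<delta>_def by (simp add: add_pos_nonneg)
  have pos: "t^2 + 1 > 0" using zero_le_power2[of t] by linarith
  have "\<delta> * (2 * (t^2 + 1)) = t - 1" unfolding \<delta>_def using pos by simp
  hence "\<delta> * (t^2 + 1) = (t - 1) / 2" by (simp add: algebra_simps)
  hence Agt: "A > 1 + \<delta>" unfolding A_def using t by (simp add: algebra_simps power2_eq_square)
  define K where "K = nat \<lceil>t / (t - 1)\<rceil>"
  have Kge: "real K \<ge> t / (t - 1)" unfolding K_def by linarith
  have "\<forall>n. \<exists>J\<ge>n. 1 \<le> J \<and> eps J * b (J-1) > \<delta> * t"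
  proof
    fix n
    obtain p where p: "p \<ge> n + K + 2" "eps p = eps (Suc p)" using pairs by blast
    define s where "s = eps p"
    have s: "s = 1 \<or> s = -1" using epsv s_def by auto
    have ss: "s * s = 1" using s by auto
    have pS: "p = Suc (p - 1)" using p by simp
    have r1: "b p = b (p-1) / t + s" using rec[of "p-1"] pS s_def by simp
    have r2: "b (Suc p) = b p / t + s" using rec[of p] p(2) s_def by simp
    show "\<exists>J\<ge>n. 1 \<le> J \<and> eps J * b (J-1) > \<delta> * t"
    proof (cases "s * b p > \<delta> * t")
      case True
      then show ?thesis using p s_def by (intro exI[of _ "Suc p"]) auto
    next
      case False
      have "s * b p = s * b (p-1) / t + 1" using r1 ss by (simp add: algebra_simps)
      hence "s * b (p-1) = t * (s * b p - 1)" using t by (simp add: field_simps)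
      also have "\<dots> \<le> t * (\<delta> * t - 1)" using False t by simp
      also have "\<dots> = -A" unfolding A_def by (simp add: algebra_simps)
      finally have sb: "s * b (p-1) \<le> -A" .
      have "p - 1 \<ge> K" "1 \<le> p - 1" using p(1) by auto
      from chain[where t=t and b=b and eps=eps and s=s and A=A and \<delta>=\<delta> and k=K and m="p-1",
          OF t rec epsv s Agt dpos this sb]
      consider (g) "\<exists>J. p - 1 - K \<le> J \<and> 1 \<le> J \<and> eps J * b (J-1) > \<delta> * t"
        | (c) "s * b (p - 1 - K) \<le> -A - real K" by force
      then show ?thesis
      proof cases
        case g
        then obtain J where "p - 1 - K \<le> J" "1 \<le> J" "eps J * b (J-1) > \<delta> * t" by blast
        moreover have "n \<le> J" using \<open>p - 1 - K \<le> J\<close> p(1) by linarith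
        ultimately show ?thesis by blast
      next
        case c
        have "\<bar>s * b (p - 1 - K)\<bar> < t / (t - 1)" using bound[of "p-1-K"] s by auto
        moreover have "A > 0" using Agt dpos by simp
        ultimately have False using c Kge by linarith
        then show ?thesis ..
      qed
    qed
  qed
  then show ?thesis using dpos by blast
qed

lemma floor2: "\<lfloor>2 * z\<rfloor> = 2 * \<lfloor>z\<rfloor> + \<lfloor>2 * z\<rfloor> mod 2" for z :: real
proof -
  have a: "of_int \<lfloor>z\<rfloor> \<le> z" "z < of_int \<lfloor>z\<rfloor> + 1" by linarith+
  show ?thesis
  proof (cases "z - of_int \<lfloor>z\<rfloor> < 1/2")
    case True
    hence "\<lfloor>2 * z\<rfloor> = 2 * \<lfloor>z\<rfloor>" using a by (intro floor_unique) (simp_all add: algebra_simps, linarith?)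
    thus ?thesis by simp
  next
    case False
    hence "\<lfloor>2 * z\<rfloor> = 2 * \<lfloor>z\<rfloor> + 1" using a by (intro floor_unique) (simp_all add: algebra_simps, linarith?)
    thus ?thesis by simp
  qed
qed

lemma bd01: "bindigit l x = 0 \<or> bindigit l x = 1"
  unfolding bindigit_def by (cases "\<lfloor>2 ^ l * x\<rfloor> mod 2 = 0") (auto simp: mod2_eq_if split: if_splits)

lemma digit_rec: "\<lfloor>2^(Suc l) * x\<rfloor> = 2 * \<lfloor>2^l * x\<rfloor> + int (bindigit (Suc l) x)"
proof -
  have "\<lfloor>2^(Suc l) * x\<rfloor> = \<lfloor>2 * (2^l * x)\<rfloor>" by (simp add: mult.assoc)
  also have "\<dots> = 2 * \<lfloor>2^l * x\<rfloor> + \<lfloor>2 * (2^l * x)\<rfloor> mod 2" by (rule floor2)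
  also have "\<lfloor>2 * (2^l * x)\<rfloor> mod 2 = int (bindigit (Suc l) x)"
    unfolding bindigit_def by (simp add: mult.assoc)
  finally show ?thesis .
qed

lemma alt_S:
  fixes x :: real
  assumes x: "x \<in> {0..1}" and alt: "\<And>l. l \<ge> M \<Longrightarrow> bindigit (Suc l) x \<noteq> bindigit (Suc (Suc l)) x"
  shows "x \<in> setS"
proof -
  define u where "u l = 2^l * x - of_int \<lfloor>2^l * x\<rfloor>" for l
  define q where "q l = (if bindigit (Suc l) x = 1 then 2/3 else 1/3 :: real)" for l
  define e where "e l = u l - q l" for l
  have urec: "u (Suc l) = 2 * u l - real (bindigit (Suc l) x)" for l
    unfolding u_def using digit_rec[of l x] by simp
  have erec: "e (Suc l) = 2 * e l" if "l \<ge> M" for l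
  proof -
    have ne: "bindigit (Suc l) x \<noteq> bindigit (Suc (Suc l)) x" using alt that by blast
    consider "bindigit (Suc l) x = 0" "bindigit (Suc (Suc l)) x = 1"
      | "bindigit (Suc l) x = 1" "bindigit (Suc (Suc l)) x = 0"
      using bd01[of "Suc l" x] bd01[of "Suc (Suc l)" x] ne by auto
    then show ?thesis
      by cases (simp_all add: e_def q_def urec)
  qed
  have epow: "e (M + k) = 2^k * e M" for k
    by (induction k) (simp_all add: erec)
  have ebound: "\<bar>e l\<bar> < 1" for l
  proof -
    have "0 \<le> u l" "u l < 1" unfolding u_def by linarith+
    moreover have "q l = 2/3 \<or> q l = 1/3" unfolding q_def by auto
    ultimately show ?thesis unfolding e_def by auto
  qed
  have e0: "e M = 0"
  proof (rule ccontr)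
    assume ne: "e M \<noteq> 0"
    obtain k where k: "1 / \<bar>e M\<bar> < 2^k" using real_arch_pow[of "2::real" "1 / \<bar>e M\<bar>"] by auto
    hence "1 < 2^k * \<bar>e M\<bar>" using ne by (simp add: field_simps)
    also have "\<dots> = \<bar>e (M + k)\<bar>" by (simp add: epow abs_mult)
    finally show False using ebound[of "M+k"] by simp
  qed
  define k where "k = nat \<lfloor>2^M * x\<rfloor>"
  have "\<lfloor>2^M * x\<rfloor> \<ge> 0" using x by simp
  hence rk: "real k = of_int \<lfloor>2^M * x\<rfloor>" unfolding k_def by simp
  have "2^M * x = real k + q M" using e0 rk unfolding e_def u_def by simp
  hence xe: "x = real k / 2^M + q M / 2^M" by (simp add: field_simps)
  have "x = real k / 2 ^ M + 1 / (3 * 2 ^ M) \<or> x = real k / 2 ^ M + 2 / (3 * 2 ^ M)"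
    using xe unfolding q_def by (auto split: if_splits)
  then show ?thesis using x unfolding setS_def by blast
qed

lemma sumbound:
  fixes t :: real and eps :: "nat \<Rightarrow> real"
  assumes t: "t > 1" and epsv: "\<And>m. eps m = 1 \<or> eps m = -1"
  shows "\<bar>\<Sum>j=0..n. eps j * t^j\<bar> < t^(Suc n) / (t - 1)"
proof -
  have ea: "\<bar>eps j\<bar> = 1" for j using epsv[of j] by auto
  have "\<bar>\<Sum>j=0..n. eps j * t^j\<bar> \<le> (\<Sum>j=0..n. \<bar>eps j * t^j\<bar>)" by (rule sum_abs)
  also have "\<dots> = (\<Sum>j<Suc n. t^j)"
    using ea t by (intro sum.cong) (auto simp: abs_mult atLeast0AtMost lessThan_Suc_atMost)
  also have "\<dots> = (t^(Suc n) - 1) / (t - 1)" using t by (subst geometric_sum) auto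
  also have "\<dots> < t^(Suc n) / (t - 1)" using t by (simp add: divide_strict_right_mono)
  finally show ?thesis .
qed

theorem mainTheorem3:
  fixes \<alpha> x :: real
  assumes "0 < \<alpha>" "\<alpha> < 1"
    and "x \<in> {0..1}" "\<not> dyadic x" "x \<notin> setS"
  shows "\<exists>\<delta>>0. \<forall>n::nat. \<exists>J::nat. J \<ge> n \<and> J \<ge> 1 \<and>
     1 / (2 powr (1 - \<alpha>) - 1) * 2 powr (real J * (1 - \<alpha>)) > \<bar>Cslope \<alpha> (J - 1) x\<bar> \<and>
     \<bar>Cslope \<alpha> (J - 1) x\<bar> > \<delta> * 2 powr (real J * (1 - \<alpha>)) \<and>
     ((Cslope \<alpha> (J - 1) x > 0 \<and> bindigit (J + 1) x = 0) \<or>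
      (Cslope \<alpha> (J - 1) x < 0 \<and> bindigit (J + 1) x = 1))"
proof -
  define t where "t = 2 powr (1 - \<alpha>)"
  have t: "t > 1" unfolding t_def using assms by simp
  have tpow: "2 powr (real j * (1 - \<alpha>)) = t ^ j" for j
  proof -
    have "t ^ j = t powr real j" using t by (simp add: powr_realpow)
    also have "\<dots> = 2 powr (real j * (1 - \<alpha>))" unfolding t_def by (simp add: powr_powr mult.commute)
    finally show ?thesis by simp
  qed
  define eps where "eps j = (-1::real) ^ bindigit (Suc j) x" for j
  have epsv: "eps m = 1 \<or> eps m = -1" for m
    using bd01[of "Suc m" x] unfolding eps_def by auto
  define C where "C n = Cslope \<alpha> n x" for n
  have Cdef: "C n = (\<Sum>j=0..n. eps j * t^j)" for n
    unfolding C_def Cslope_def eps_def using tpow by (simp add: mult.commute)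
  define b where "b n = C n / t^n" for n
  have rec: "b (Suc m) = b m / t + eps (Suc m)" for m
  proof -
    have "C (Suc m) = C m + eps (Suc m) * t^(Suc m)" unfolding Cdef by simp
    thus ?thesis unfolding b_def using t by (simp add: field_simps)
  qed
  have bound: "\<bar>b m\<bar> < t / (t - 1)" for m
  proof -
    have "\<bar>C m\<bar> < t^(Suc m) / (t - 1)" unfolding Cdef by (rule sumbound[OF t epsv])
    moreover have "t^m > 0" using t by simp
    ultimately show ?thesis unfolding b_def using t by (simp add: field_simps abs_div)
  qed
  have pairs: "\<exists>p\<ge>N. eps p = eps (Suc p)" for N
  proof (rule ccontr)
    assume "\<not> ?thesis"
    hence "bindigit (Suc l) x \<noteq> bindigit (Suc (Suc l)) x" if "l \<ge> N" for l
      using that unfolding eps_def by force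
    hence "x \<in> setS" using alt_S[OF assms(3)] by blast
    thus False using assms(5) by simp
  qed
  obtain \<delta> where d: "\<delta> > 0" and dJ: "\<forall>n. \<exists>J\<ge>n. 1 \<le> J \<and> eps J * b (J-1) > \<delta> * t"
    using abstract[OF t rec epsv bound pairs] by blast
  have "\<exists>J::nat. J \<ge> n \<and> J \<ge> 1 \<and>
     1 / (t - 1) * t^J > \<bar>C (J - 1)\<bar> \<and> \<bar>C (J - 1)\<bar> > \<delta> * t^J \<and>
     ((C (J - 1) > 0 \<and> bindigit (J + 1) x = 0) \<or> (C (J - 1) < 0 \<and> bindigit (J + 1) x = 1))" for n
  proof -
    obtain J where J: "J \<ge> n" "1 \<le> J" "eps J * b (J-1) > \<delta> * t" using dJ by blast
    have JS: "J = Suc (J - 1)" using J by simp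
    have tJ: "t^J = t * t^(J-1)" by (subst JS) simp
    have tp: "t^(J-1) > 0" using t by simp
    have key: "eps J * C (J-1) > \<delta> * t^J"
    proof -
      have "eps J * C (J-1) = (eps J * b (J-1)) * t^(J-1)" unfolding b_def using tp t by simp
      also have "\<dots> > (\<delta> * t) * t^(J-1)" using J(3) tp by (intro mult_strict_right_mono) auto
      finally show ?thesis using tJ by (simp add: mult.assoc)
    qed
    have up: "\<bar>C (J-1)\<bar> < t^J / (t - 1)" using sumbound[OF t epsv, where n="J-1"] JS unfolding Cdef by simp
    have pos: "\<delta> * t^J > 0" using d t by simp
    show ?thesis
    proof (cases "eps J = 1")
      case True
      hence "bindigit (J+1) x = 0" using bd01[of "Suc J" x] unfolding eps_def by auto
      moreover have "C (J-1) > \<delta> * t^J" using key True by simp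
      ultimately show ?thesis using J up pos by (intro exI[of _ J]) auto
    next
      case False
      hence e: "eps J = -1" using epsv by blast
      hence "bindigit (J+1) x = 1" using bd01[of "Suc J" x] unfolding eps_def by auto
      moreover have "- C (J-1) > \<delta> * t^J" using key e by simp
      ultimately show ?thesis using J up pos by (intro exI[of _ J]) auto
    qed
  qed
  thus ?thesis using d unfolding C_def tpow t_def[symmetric] by blast
qed

end
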